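(* Let $d\in\mathbb{N}$. Let $(X_S,Y_S)\sim\mathcal{N}(\mu_S,\Sigma_S)$ and $(X_T,Y_T)\sim\mathcal{N}(\mu_T,\Sigma_T)$ be $(d+1)$-dimensional Gaussian random vectors (source and target data) with $$\mu_\cdot=\begin{pmatrix}\mu_{\cdot,X}\\ \mu_{\cdot,Y}\end{pmatrix},\qquad \Sigma_\cdot=\begin{pmatrix}\Sigma_{\cdot,X}&\Sigma_{\cdot,XY}\\ \Sigma_{\cdot,YX}&\Sigma_{\cdot,Y}\end{pmatrix},$$ where $\mu_{\cdot,X},\Sigma_{\cdot,XY}\in\mathbb{R}^d$, $\mu_{\cdot,Y},\Sigma_{\cdot,Y}\in\mathbb{R}$, $\Sigma_{\cdot,YX}=\Sigma_{\cdot,XY}^\top$, and $\Sigma_{\cdot,X}\in\mathbb{R}^{d\times d}$ is invertible, for $\cdot\in\{S,T\}$. For $f:\mathbb{R}^d\to\mathbb{R}$ let $\mathcal{L}_S(f)=\mathbb{E}|Y_S-f(X_S)|^2$ and $\mathcal{L}_T(f)=\mathbb{E}|Y_T-f(X_T)|^2$, and let $f_\cdot^*(x)=w_\cdot^\top x+b_\cdot$ with $w_\cdot=\Sigma_{\cdot,X}^{-1}\Sigma_{\cdot,XY}$, $b_\cdot=\mu_{\cdot,Y}-\Sigma_{\cdot,YX}\Sigma_{\cdot,X}^{-1}\mu_{\cdot,X}$ (the minimizers of $\mathcal{L}_\cdot$ over all functions $\mathbb{R}^d\to\mathbb{R}$). Define the regret $\mathcal{R}(S,T):=\mathcal{L}_T(f_S^*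 )-\mathcal{L}_T(f_T^* )$ and the Wasserstein-based transfer risk $\mathcal{C}_W(S,T):=\mathcal{W}_2(\mathbb{P}_{ST},\mathbb{P}_T)^2$, where $\mathbb{P}_{ST}=\mathrm{Law}(f_S^*(X_T))$ and $\mathbb{P}_T=\mathrm{Law}(f_T^*(X_T))$. Then $$\mathcal{C}_W(S,T)\leq\mathcal{R}(S,T).$$
   Context: This is transfer learning with identity input and output transport maps, so the only intermediate model is the pretrained source model $f_S^*$ applied to the target input. $\mathcal{W}_2(\mu,\nu)^2=\inf_{\gamma\in\Pi(\mu,\nu)}\int|x-y|^2\gamma(dx,dy)$ over couplings $\gamma$ of probability measures $\mu,\nu$ on $\mathbb{R}$. *)

theory Defs
  imports "HOL-Probability.Probability"
begin

definition real_normal :: "'s measure \<Rightarrow> ('s \<Rightarrow> real) \<Rightarrow> real \<Rightarrow> real \<Rightarrow> bool" where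
  "real_normal M Z m v \<longleftrightarrow> Z \<in> borel_measurable M \<and> v \<ge> 0 \<and>
     (if v = 0 then (AE \<omega> in M. Z \<omega> = m)
      else distributed M lborel Z (\<lambda>x. ennreal (normal_density m (sqrt v) x)))"

text \<open>(X, Y) with X in R^d, Y in R is a (d+1)-dimensional Gaussian vector with mean
  (muX, muY) and covariance [[SX, SXY], [SXY^T, SY]]: every linear combination
  u.X + t Y is normal with mean u.muX + t muY and variance (u,t)^T Sigma (u,t).\<close>
definition gaussian_XY ::
  "'s measure \<Rightarrow> ('s \<Rightarrow> real^'d) \<Rightarrow> ('s \<Rightarrow> real) \<Rightarrow> real^'d \<Rightarrow> real
   \<Rightarrow> real^'d^'d \<Rightarrow> real^'d \<Rightarrow> real \<Rightarrow> bool" where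
  "gaussian_XY M X Y muX muY SX SXY SY \<longleftrightarrow>
     X \<in> borel_measurable M \<and> Y \<in> borel_measurable M \<and>
     (\<forall>u t. real_normal M (\<lambda>\<omega>. u \<bullet> X \<omega> + t * Y \<omega>)
              (u \<bullet> muX + t * muY)
              (u \<bullet> (SX *v u) + 2 * t * (SXY \<bullet> u) + t\<^sup>2 * SY))"

definition f_star :: "real^'d \<Rightarrow> real \<Rightarrow> real^'d^'d \<Rightarrow> real^'d \<Rightarrow> real^'d \<Rightarrow> real" where
  "f_star muX muY SX SXY x =
     (matrix_inv SX *v SXY) \<bullet> x + (muY - SXY \<bullet> (matrix_inv SX *v muX))"

definition sq_loss :: "'s measure \<Rightarrow> ('s \<Rightarrow> real^'d) \<Rightarrow> ('s \<Rightarrow> real) \<Rightarrow> (real^'d \<Rightarrow> real) \<Rightarrow> real" where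
  "sq_loss M X Y f = (\<integral>\<omega>. (Y \<omega> - f (X \<omega>))\<^sup>2 \<partial>M)"

definition couplings :: "real measure \<Rightarrow> real measure \<Rightarrow> (real \<times> real) measure set" where
  "couplings \<mu> \<nu> = {\<gamma>. prob_space \<gamma> \<and> sets \<gamma> = sets (borel \<Otimes>\<^sub>M borel) \<and>
      distr \<gamma> borel fst = \<mu> \<and> distr \<gamma> borel snd = \<nu>}"

definition wasserstein2_sq :: "real measure \<Rightarrow> real measure \<Rightarrow> ennreal" where
  "wasserstein2_sq \<mu> \<nu> =
     (INF \<gamma>\<in>couplings \<mu> \<nu>. \<integral>\<^sup>+ p. ennreal ((fst p - snd p)\<^sup>2) \<partial>\<gamma>)"

end

theory Submission imports Defs begin

lemma normal_sq_moment:
  fixes m \<sigma> b :: real assumes "\<sigma> > 0"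
  shows "has_bochner_integral lborel (\<lambda>x. normal_density m \<sigma> x * (x - b)\<^sup>2) (\<sigma>\<^sup>2 + (m - b)\<^sup>2)"
proof -
  have e0: "has_bochner_integral lborel (\<lambda>x. normal_density m \<sigma> x * (x - m)^(2*1)) (fact (2 * 1) / ((2 / \<sigma>\<^sup>2)^1 * fact 1))"
    by (rule normal_moment_even[where k=1 and \<mu>=m, OF assms])
  have eq: "fact (2 * 1) / ((2 / \<sigma>\<^sup>2)^1 * fact 1) = \<sigma>\<^sup>2" using assms by (simp add: field_simps)
  have e: "has_bochner_integral lborel (\<lambda>x. normal_density m \<sigma> x * (x - m)^(2*1)) (\<sigma>\<^sup>2)"
    using e0 unfolding eq .
  have o: "has_bochner_integral lborel (\<lambda>x. normal_density m \<sigma> x * (x - m)^(2*0+1)) 0"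
    by (rule normal_moment_odd[where k=0 and \<mu>=m, OF assms])
  have c: "has_bochner_integral lborel (\<lambda>x. normal_density m \<sigma> x) 1"
  proof -
    have "integrable lborel (normal_density m \<sigma>)" by (rule integrable_normal_density[OF assms])
    then have "has_bochner_integral lborel (normal_density m \<sigma>) (integral\<^sup>L lborel (normal_density m \<sigma>))"
      by (rule has_bochner_integral_integrable)
    then show ?thesis using integral_normal_density[OF assms, of m] by simp
  qed
  have "has_bochner_integral lborel (\<lambda>x. normal_density m \<sigma> x * (x - m)^(2*1) + (2*(m-b)) * (normal_density m \<sigma> x * (x - m)^(2*0+1)) + (m-b)\<^sup>2 * normal_density m \<sigma> x) (\<sigma>\<^sup>2 + (2*(m-b)) * 0 + (m-b)\<^sup>2 * 1)"
    by (intro has_bochner_integral_add has_bochner_integral_mult_right e o c)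
  moreover have "\<And>x. normal_density m \<sigma> x * (x - m)^(2*1) + (2*(m-b)) * (normal_density m \<sigma> x * (x - m)^(2*0+1)) + (m-b)\<^sup>2 * normal_density m \<sigma> x = normal_density m \<sigma> x * (x - b)\<^sup>2"
    by (simp add: power2_eq_square algebra_simps)
  ultimately show ?thesis by simp
qed

lemma real_normal_sq:
  assumes P: "prob_space M" and N: "real_normal M Z m v"
  shows "integrable M (\<lambda>\<omega>. (Z \<omega> - b)\<^sup>2) \<and> (\<integral>\<omega>. (Z \<omega> - b)\<^sup>2 \<partial>M) = v + (m - b)\<^sup>2"
proof (cases "v = 0")
  case True
  then have ae: "AE \<omega> in M. Z \<omega> = m" and meas: "Z \<in> borel_measurable M" using N by (auto simp: real_normal_def)
  have ae2: "AE \<omega> in M. (\<lambda>_. (m - b)\<^sup>2) \<omega> = (Z \<omega> - b)\<^sup>2" using ae by auto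
  interpret prob_space M by fact
  have "integrable M (\<lambda>_. (m - b)\<^sup>2)" by simp
  then have "integrable M (\<lambda>\<omega>. (Z \<omega> - b)\<^sup>2)"
    by (rule integrable_cong_AE_imp[OF _ _ ae2]) (use meas in measurable)
  moreover have "(\<integral>\<omega>. (Z \<omega> - b)\<^sup>2 \<partial>M) = (\<integral>\<omega>. (m - b)\<^sup>2 \<partial>M)"
    by (rule integral_cong_AE) (use meas ae in auto)
  ultimately show ?thesis using True by (simp add: prob_space)
next
  case False
  then have v: "v > 0" and D: "distributed M lborel Z (\<lambda>x. ennreal (normal_density m (sqrt v) x))"
    using N by (auto simp: real_normal_def)
  have s: "sqrt v > 0" using v by simp
  note h = normal_sq_moment[OF s, of m b]
  have "integrable lborel (\<lambda>x. normal_density m (sqrt v) x * (x - b)\<^sup>2)" using h by (rule integrable.intros)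
  then have "integrable M (\<lambda>\<omega>. (Z \<omega> - b)\<^sup>2)"
    using distributed_integrable[OF D, of "\<lambda>x. (x - b)\<^sup>2"] by auto
  moreover have "(\<integral>\<omega>. (Z \<omega> - b)\<^sup>2 \<partial>M) = v + (m - b)\<^sup>2"
    using distributed_integral[OF D, of "\<lambda>x. (x - b)\<^sup>2"] has_bochner_integral_integral_eq[OF h] v by auto
  ultimately show ?thesis by simp
qed


lemma inv_props:
  fixes A :: "real^'n^'n"
  assumes "invertible A"
  shows "A ** matrix_inv A = mat 1" "matrix_inv A ** A = mat 1"
proof -
  have "\<exists>A'. A ** A' = mat 1 \<and> A' ** A = mat 1" using assms unfolding invertible_def by blast
  then have "A ** matrix_inv A = mat 1 \<and> matrix_inv A ** A = mat 1"
    unfolding matrix_inv_def by (rule someI_ex)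
  then show "A ** matrix_inv A = mat 1" "matrix_inv A ** A = mat 1" by auto
qed

lemma inv_sym:
  fixes A :: "real^'n^'n"
  assumes "invertible A" "transpose A = A"
  shows "transpose (matrix_inv A) = matrix_inv A"
proof -
  let ?B = "matrix_inv A"
  have l: "transpose ?B ** A = mat 1"
    using inv_props(1)[OF assms(1)] assms(2) by (metis matrix_transpose_mul transpose_mat)
  have "transpose ?B = transpose ?B ** (A ** ?B)" using inv_props(1)[OF assms(1)] by simp
  also have "\<dots> = (transpose ?B ** A) ** ?B" by (simp add: matrix_mul_assoc)
  also have "\<dots> = ?B" using l by simp
  finally show ?thesis .
qed

lemma sym_dot:
  fixes A :: "real^'n^'n"
  assumes "transpose A = A"
  shows "x \<bullet> (A *v y) = y \<bullet> (A *v x)"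
  by (metis assms dot_lmul_matrix transpose_matrix_vector inner_commute)

lemma inv_apply:
  fixes A :: "real^'n^'n"
  assumes "invertible A"
  shows "A *v (matrix_inv A *v c) = c"
  by (simp add: matrix_vector_mul_assoc inv_props(1)[OF assms])

lemma key_identity:
  fixes A :: "real^'n^'n" and wS wT mu c :: "real^'n"
  assumes Aw: "A *v wT = c" and sy: "transpose A = A" and mT: "- wT \<bullet> mu + muY - bT = 0"
  shows "((-wS) \<bullet> (A *v (-wS)) + 2 * 1 * (c \<bullet> (-wS)) + 1\<^sup>2 * sY + ((-wS) \<bullet> mu + 1 * muY - bS)\<^sup>2)
       - ((-wT) \<bullet> (A *v (-wT)) + 2 * 1 * (c \<bullet> (-wT)) + 1\<^sup>2 * sY + ((-wT) \<bullet> mu + 1 * muY - bT)\<^sup>2)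
       = (wS - wT) \<bullet> (A *v (wS - wT)) + 2 * 0 * (c \<bullet> (wS - wT)) + 0\<^sup>2 * sY
         + ((wS - wT) \<bullet> mu + 0 * muY - (bT - bS))\<^sup>2"
proof -
  have s1: "wT \<bullet> (A *v wS) = wS \<bullet> c" using sym_dot[OF sy, of wT wS] Aw by simp
  have s2: "wT \<bullet> (A *v wT) = wT \<bullet> c" using Aw by simp
  have mneg: "A *v (-x) = - (A *v x)" for x using matrix_vector_mult_diff_distrib[of A 0 x] by simp
  have m: "muY = wT \<bullet> mu + bT" using mT by (simp add: inner_minus_left)
  show ?thesis
    by (simp add: m matrix_vector_mult_diff_distrib mneg inner_diff_left inner_diff_right
        s1 s2 Aw inner_commute[of c] power2_eq_square algebra_simps)
qed

theorem proposition4: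
  fixes MS :: "'s measure" and MT :: "'t measure"
    and XS :: "'s \<Rightarrow> real^'d" and YS :: "'s \<Rightarrow> real"
    and XT :: "'t \<Rightarrow> real^'d" and YT :: "'t \<Rightarrow> real"
    and muSX muTX :: "real^'d" and muSY muTY :: real
    and SSX STX :: "real^'d^'d" and SSXY STXY :: "real^'d" and SSY STY :: real
  assumes "prob_space MS" and "prob_space MT"
    and "transpose SSX = SSX" and "transpose STX = STX"
    and "invertible SSX" and "invertible STX"
    and "gaussian_XY MS XS YS muSX muSY SSX SSXY SSY"
    and "gaussian_XY MT XT YT muTX muTY STX STXY STY"
  shows "wasserstein2_sq
           (distr MT borel (\<lambda>\<omega>. f_star muSX muSY SSX SSXY (XT \<omega>)))
           (distr MT borel (\<lambda>\<omega>. f_star muTX muTY STX STXY (XT \<omega>)))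
         \<le> ennreal (sq_loss MT XT YT (f_star muSX muSY SSX SSXY)
                    - sq_loss MT XT YT (f_star muTX muTY STX STXY))"
proof -
  define wS where "wS = matrix_inv SSX *v SSXY"
  define bS where "bS = muSY - SSXY \<bullet> (matrix_inv SSX *v muSX)"
  define wT where "wT = matrix_inv STX *v STXY"
  define bT where "bT = muTY - STXY \<bullet> (matrix_inv STX *v muTX)"
  have fS: "f_star muSX muSY SSX SSXY = (\<lambda>x. wS \<bullet> x + bS)"
    by (rule ext) (simp add: f_star_def wS_def bS_def)
  have fT: "f_star muTX muTY STX STXY = (\<lambda>x. wT \<bullet> x + bT)"
    by (rule ext) (simp add: f_star_def wT_def bT_def)
  interpret P: prob_space MT by fact
  have G: "\<And>u t. real_normal MT (\<lambda>\<omega>. u \<bullet> XT \<omega> + t * YT \<omega>)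
              (u \<bullet> muTX + t * muTY)
              (u \<bullet> (STX *v u) + 2 * t * (STXY \<bullet> u) + t\<^sup>2 * STY)"
    and XT[measurable]: "XT \<in> borel_measurable MT" and YT[measurable]: "YT \<in> borel_measurable MT"
    using assms(8) unfolding gaussian_XY_def by auto
  have Aw: "STX *v wT = STXY" unfolding wT_def by (rule inv_apply[OF assms(6)])
  have mT: "- wT \<bullet> muTX + muTY - bT = 0"
  proof -
    have "wT \<bullet> muTX = STXY \<bullet> (matrix_inv STX *v muTX)"
      unfolding wT_def using sym_dot[OF inv_sym[OF assms(6,4)], of muTX STXY] by (simp add: inner_commute)
    then show ?thesis by (simp add: bT_def inner_minus_left)
  qed
  note sq = real_normal_sq[OF assms(2)]
  have L1: "sq_loss MT XT YT (f_star muSX muSY SSX SSXY) =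
     (-wS) \<bullet> (STX *v (-wS)) + 2 * 1 * (STXY \<bullet> (-wS)) + 1\<^sup>2 * STY + ((-wS) \<bullet> muTX + 1 * muTY - bS)\<^sup>2"
  proof -
    have "sq_loss MT XT YT (f_star muSX muSY SSX SSXY) = (\<integral>\<omega>. ((-wS) \<bullet> XT \<omega> + 1 * YT \<omega> - bS)\<^sup>2 \<partial>MT)"
      unfolding sq_loss_def fS by (rule Bochner_Integration.integral_cong) (auto simp: inner_minus_left power2_commute algebra_simps)
    then show ?thesis using sq[OF G, of "-wS" 1 bS] by simp
  qed
  have L2: "sq_loss MT XT YT (f_star muTX muTY STX STXY) =
     (-wT) \<bullet> (STX *v (-wT)) + 2 * 1 * (STXY \<bullet> (-wT)) + 1\<^sup>2 * STY + ((-wT) \<bullet> muTX + 1 * muTY - bT)\<^sup>2"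
  proof -
    have "sq_loss MT XT YT (f_star muTX muTY STX STXY) = (\<integral>\<omega>. ((-wT) \<bullet> XT \<omega> + 1 * YT \<omega> - bT)\<^sup>2 \<partial>MT)"
      unfolding sq_loss_def fT by (rule Bochner_Integration.integral_cong) (auto simp: inner_minus_left power2_commute algebra_simps)
    then show ?thesis using sq[OF G, of "-wT" 1 bT] by simp
  qed
  have Deq: "\<And>\<omega>. (wS \<bullet> XT \<omega> + bS - (wT \<bullet> XT \<omega> + bT))\<^sup>2 = ((wS - wT) \<bullet> XT \<omega> + 0 * YT \<omega> - (bT - bS))\<^sup>2"
    by (simp add: inner_diff_left algebra_simps)
  have D3: "integrable MT (\<lambda>\<omega>. (wS \<bullet> XT \<omega> + bS - (wT \<bullet> XT \<omega> + bT))\<^sup>2)"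
    "(\<integral>\<omega>. (wS \<bullet> XT \<omega> + bS - (wT \<bullet> XT \<omega> + bT))\<^sup>2 \<partial>MT) =
     (wS - wT) \<bullet> (STX *v (wS - wT)) + 2 * 0 * (STXY \<bullet> (wS - wT)) + 0\<^sup>2 * STY
         + ((wS - wT) \<bullet> muTX + 0 * muTY - (bT - bS))\<^sup>2"
    using sq[OF G, of "wS - wT" 0 "bT - bS"] unfolding Deq by auto
  have reg: "sq_loss MT XT YT (f_star muSX muSY SSX SSXY) - sq_loss MT XT YT (f_star muTX muTY STX STXY)
      = (\<integral>\<omega>. (wS \<bullet> XT \<omega> + bS - (wT \<bullet> XT \<omega> + bT))\<^sup>2 \<partial>MT)"
    unfolding L1 L2 D3(2) by (rule key_identity[OF Aw assms(4) mT])
  define F where "F = (\<lambda>\<omega>. (wS \<bullet> XT \<omega> + bS, wT \<bullet> XT \<omega> + bT))"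
  have Fm[measurable]: "F \<in> measurable MT (borel \<Otimes>\<^sub>M borel)" unfolding F_def by measurable
  define \<gamma> where "\<gamma> = distr MT (borel \<Otimes>\<^sub>M borel) F"
  have cpl: "\<gamma> \<in> couplings (distr MT borel (\<lambda>\<omega>. f_star muSX muSY SSX SSXY (XT \<omega>)))
           (distr MT borel (\<lambda>\<omega>. f_star muTX muTY STX STXY (XT \<omega>)))"
    unfolding couplings_def \<gamma>_def fS fT
  proof (intro CollectI conjI)
    show "prob_space (distr MT (borel \<Otimes>\<^sub>M borel) F)" by (rule P.prob_space_distr) measurable
    show "sets (distr MT (borel \<Otimes>\<^sub>M borel) F) = sets (borel \<Otimes>\<^sub>M borel)" by simp
    show "distr (distr MT (borel \<Otimes>\<^sub>M borel) F) borel fst = distr MT borel (\<lambda>\<omega>. wS \<bullet> XT \<omega> + bS)"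
      by (subst distr_distr) (auto simp: F_def comp_def)
    show "distr (distr MT (borel \<Otimes>\<^sub>M borel) F) borel snd = distr MT borel (\<lambda>\<omega>. wT \<bullet> XT \<omega> + bT)"
      by (subst distr_distr) (auto simp: F_def comp_def)
  qed
  have "wasserstein2_sq (distr MT borel (\<lambda>\<omega>. f_star muSX muSY SSX SSXY (XT \<omega>)))
           (distr MT borel (\<lambda>\<omega>. f_star muTX muTY STX STXY (XT \<omega>)))
        \<le> \<integral>\<^sup>+ p. ennreal ((fst p - snd p)\<^sup>2) \<partial>\<gamma>"
    unfolding wasserstein2_sq_def using cpl by (rule INF_lower)
  also have "\<dots> = \<integral>\<^sup>+ \<omega>. ennreal ((wS \<bullet> XT \<omega> + bS - (wT \<bullet> XT \<omega> + bT))\<^sup>2) \<partial>MT"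
    unfolding \<gamma>_def by (subst nn_integral_distr) (auto simp: F_def)
  also have "\<dots> = ennreal (\<integral>\<omega>. (wS \<bullet> XT \<omega> + bS - (wT \<bullet> XT \<omega> + bT))\<^sup>2 \<partial>MT)"
    by (rule nn_integral_eq_integral[OF D3(1)]) auto
  finally show ?thesis unfolding reg .
qed

end
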